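(* Let $G$ and $H$ be finite directed graphs without sinks or sources, each having a unique terminal component, $C$ and $C'$ respectively. If $\chi : X_G \to X_H$ is a conjugacy, then $\chi(X_C) = X_{C'}$.
   Context: For a finite directed graph $H$: a vertex is recurrent if there is a path from it to itself; recurrent vertices $v,w$ are equivalent if there are paths from $v$ to $w$ and from $w$ to $v$; the equivalence classes are the components. A component $C$ is terminal if there is no path from a vertex of $C$ to a vertex of another component. $X_H$ is the edge shift of $H$ and $X_C$ the edge shift of the subgraph with vertex set $C$ and all edges of $H$ with both endpoints in $C$. A conjugacy is a shift-commuting homeomorphism. *)

theory Defs
  imports "HOL-Analysis.Analysis"
begin

definition fin_digraph :: "'v set \<Rightarrow> 'e set \<Rightarrow> ('e \<Rightarrow> 'v) \<Rightarrow> ('e \<Rightarrow> 'v) \<Rightarrow> bool" where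
  "fin_digraph V E s t \<longleftrightarrow> finite V \<and> finite E \<and> (\<forall>e\<in>E. s e \<in> V \<and> t e \<in> V)"

definition no_sinks_sources :: "'v set \<Rightarrow> 'e set \<Rightarrow> ('e \<Rightarrow> 'v) \<Rightarrow> ('e \<Rightarrow> 'v) \<Rightarrow> bool" where
  "no_sinks_sources V E s t \<longleftrightarrow> (\<forall>v\<in>V. (\<exists>e\<in>E. s e = v) \<and> (\<exists>e\<in>E. t e = v))"

definition edge_rel :: "'e set \<Rightarrow> ('e \<Rightarrow> 'v) \<Rightarrow> ('e \<Rightarrow> 'v) \<Rightarrow> ('v \<times> 'v) set" where
  "edge_rel E s t = {(s e, t e) | e. e \<in> E}"

definition recurrent :: "'e set \<Rightarrow> ('e \<Rightarrow> 'v) \<Rightarrow> ('e \<Rightarrow> 'v) \<Rightarrow> 'v \<Rightarrow> bool" where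
  "recurrent E s t v \<longleftrightarrow> (v, v) \<in> (edge_rel E s t)\<^sup>+"

definition is_component :: "'e set \<Rightarrow> ('e \<Rightarrow> 'v) \<Rightarrow> ('e \<Rightarrow> 'v) \<Rightarrow> 'v set \<Rightarrow> bool" where
  "is_component E s t C \<longleftrightarrow> (\<exists>v. recurrent E s t v \<and>
     C = {w. recurrent E s t w \<and> (v, w) \<in> (edge_rel E s t)\<^sup>+ \<and> (w, v) \<in> (edge_rel E s t)\<^sup>+})"

definition terminal_component :: "'e set \<Rightarrow> ('e \<Rightarrow> 'v) \<Rightarrow> ('e \<Rightarrow> 'v) \<Rightarrow> 'v set \<Rightarrow> bool" where
  "terminal_component E s t C \<longleftrightarrow> is_component E s t C \<and>
     (\<forall>D. is_component E s t D \<and> D \<noteq> C \<longrightarrow>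
        (\<forall>v\<in>C. \<forall>w\<in>D. (v, w) \<notin> (edge_rel E s t)\<^sup>+))"

definition sub_edges :: "'e set \<Rightarrow> ('e \<Rightarrow> 'v) \<Rightarrow> ('e \<Rightarrow> 'v) \<Rightarrow> 'v set \<Rightarrow> 'e set" where
  "sub_edges E s t C = {e \<in> E. s e \<in> C \<and> t e \<in> C}"

definition edge_shift :: "'e set \<Rightarrow> ('e \<Rightarrow> 'v) \<Rightarrow> ('e \<Rightarrow> 'v) \<Rightarrow> (int \<Rightarrow> 'e) set" where
  "edge_shift E s t = {x. \<forall>i. x i \<in> E \<and> t (x i) = s (x (i + 1))}"

definition shift :: "(int \<Rightarrow> 'a) \<Rightarrow> (int \<Rightarrow> 'a)" where
  "shift x = (\<lambda>i. x (i + 1))"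

definition shift_topology :: "'e set \<Rightarrow> ('e \<Rightarrow> 'v) \<Rightarrow> ('e \<Rightarrow> 'v) \<Rightarrow> (int \<Rightarrow> 'e) topology" where
  "shift_topology E s t = subtopology (product_topology (\<lambda>_::int. discrete_topology E) UNIV) (edge_shift E s t)"

definition conjugacy ::
  "'e set \<Rightarrow> ('e \<Rightarrow> 'v) \<Rightarrow> ('e \<Rightarrow> 'v) \<Rightarrow> 'f set \<Rightarrow> ('f \<Rightarrow> 'w) \<Rightarrow> ('f \<Rightarrow> 'w) \<Rightarrow> ((int \<Rightarrow> 'e) \<Rightarrow> (int \<Rightarrow> 'f)) \<Rightarrow> bool" where
  "conjugacy E s t F s' t' \<phi> \<longleftrightarrow>
     homeomorphic_map (shift_topology E s t) (shift_topology F s' t') \<phi> \<and>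
     (\<forall>x\<in>edge_shift E s t. \<phi> (shift x) = shift (\<phi> x))"

end

theory Submission
  imports Defs
begin


lemma topspace_shift: "topspace (shift_topology E s t) = edge_shift E s t"
  unfolding shift_topology_def edge_shift_def by (auto simp: PiE_iff)

lemma open_coord:
  assumes "finite K" "\<And>i. i \<in> K \<Longrightarrow> A i \<subseteq> E"
  shows "openin (product_topology (\<lambda>_::int. discrete_topology E) UNIV)
           {u \<in> PiE UNIV (\<lambda>_. E). \<forall>i\<in>K. u i \<in> A i}"
proof -
  have eq: "{u \<in> PiE UNIV (\<lambda>_. E). \<forall>i\<in>K. u i \<in> A i} = PiE UNIV (\<lambda>i. if i \<in> K then A i else E)"
  proof (rule set_eqI)
    fix x show "x \<in> {u \<in> PiE UNIV (\<lambda>_. E). \<forall>i\<in>K. u i \<in> A i} \<longleftrightarrow> x \<in> PiE UNIV (\<lambda>i. if i \<in> K then A i else E)"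
      unfolding PiE_UNIV_domain using assms(2) by (simp add: Pi_iff) (metis subsetD)
  qed
  have "finite {i \<in> UNIV. (if i \<in> K then A i else E) \<noteq> topspace (discrete_topology E)}"
    by (rule finite_subset[OF _ assms(1)]) auto
  then show ?thesis unfolding eq openin_PiE_gen using assms(2) by auto
qed

lemma open_coord_shift:
  assumes "finite K" "\<And>i. i \<in> K \<Longrightarrow> A i \<subseteq> E"
  shows "openin (shift_topology E s t) {u \<in> edge_shift E s t. \<forall>i\<in>K. u i \<in> A i}"
proof -
  have "{u \<in> edge_shift E s t. \<forall>i\<in>K. u i \<in> A i} = {u \<in> PiE UNIV (\<lambda>_. E). \<forall>i\<in>K. u i \<in> A i} \<inter> edge_shift E s t"
    unfolding edge_shift_def PiE_UNIV_domain by auto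
  then show ?thesis unfolding shift_topology_def openin_subtopology using open_coord[OF assms] by (intro exI conjI)
qed

definition cyl :: "'e set \<Rightarrow> ('e \<Rightarrow> 'v) \<Rightarrow> ('e \<Rightarrow> 'v) \<Rightarrow> (int \<Rightarrow> 'e) \<Rightarrow> nat \<Rightarrow> (int \<Rightarrow> 'e) set" where
  "cyl E s t a N = {u \<in> edge_shift E s t. \<forall>i. \<bar>i\<bar> \<le> int N \<longrightarrow> u i = a i}"

lemma cyl_open:
  assumes "a \<in> edge_shift E s t"
  shows "openin (shift_topology E s t) (cyl E s t a N)"
proof -
  have "cyl E s t a N = {u \<in> edge_shift E s t. \<forall>i\<in>{-int N..int N}. u i \<in> {a i}}"
    unfolding cyl_def by (auto simp: abs_le_iff)
  moreover have "openin (shift_topology E s t) {u \<in> edge_shift E s t. \<forall>i\<in>{-int N..int N}. u i \<in> {a i}}"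
    using open_coord_shift[of "{-int N..int N}" "\<lambda>i. {a i}" E s t] assms unfolding edge_shift_def by blast
  ultimately show ?thesis by simp
qed

lemma cyl_mono: "N \<le> M \<Longrightarrow> cyl E s t a M \<subseteq> cyl E s t a N"
  unfolding cyl_def by auto

lemma cyl_self: "a \<in> edge_shift E s t \<Longrightarrow> a \<in> cyl E s t a N"
  unfolding cyl_def by auto

lemma nbhd_cyl:
  assumes "openin (shift_topology E s t) S" "a \<in> S"
  shows "\<exists>N. cyl E s t a N \<subseteq> S"
proof -
  obtain S0 where S0: "openin (product_topology (\<lambda>_::int. discrete_topology E) UNIV) S0"
    "S = S0 \<inter> edge_shift E s t"
    using assms(1) unfolding shift_topology_def openin_subtopology by blast
  then have "a \<in> S0" using assms by auto
  then obtain U where U: "finite {i \<in> UNIV. U i \<noteq> E}" "a \<in> PiE UNIV U" "PiE UNIV U \<subseteq> S0"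
    using S0(1) unfolding openin_product_topology_alt by force
  define K where "K = {i \<in> UNIV. U i \<noteq> E}"
  define N where "N = Max (insert 0 (nat ` abs ` K))"
  have fK: "finite K" using U(1) K_def by simp
  have Kb: "\<bar>i\<bar> \<le> int N" if "i \<in> K" for i
  proof -
    have "nat \<bar>i\<bar> \<le> N" unfolding N_def using fK that by (intro Max_ge) auto
    then show ?thesis by simp
  qed
  have "cyl E s t a N \<subseteq> S0"
  proof
    fix u assume u: "u \<in> cyl E s t a N"
    have "u \<in> PiE UNIV U"
    proof (simp add: PiE_UNIV_domain Pi_iff, intro allI)
      fix i show "u i \<in> U i"
      proof (cases "i \<in> K")
        case True then show ?thesis using u Kb[OF True] U(2) unfolding cyl_def by (auto simp: PiE_UNIV_domain Pi_iff)
      next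
        case False then have "U i = E" unfolding K_def by auto
        then show ?thesis using u unfolding cyl_def edge_shift_def by auto
      qed
    qed
    then show "u \<in> S0" using U(3) by auto
  qed
  then show ?thesis using S0(2) unfolding cyl_def by auto
qed

lemma compact_shift:
  assumes "finite E"
  shows "compact_space (shift_topology E s t)"
proof -
  let ?P = "product_topology (\<lambda>_::int. discrete_topology E) UNIV"
  have cP: "compact_space ?P"
    using assms by (simp add: compact_space_product_topology compact_space_discrete_topology)
  have "openin ?P (topspace ?P - edge_shift E s t)"
  proof (subst openin_subopen, intro ballI)
    fix u assume u: "u \<in> topspace ?P - edge_shift E s t"
    then obtain i where i: "t (u i) \<noteq> s (u (i+1))" unfolding edge_shift_def by (auto simp: PiE_UNIV_domain Pi_iff)
    let ?T = "{v \<in> PiE UNIV (\<lambda>_. E). \<forall>j\<in>{i, i+1}. v j \<in> {u j}}"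
    have "openin ?P ?T" by (rule open_coord) (use u in \<open>auto simp: PiE_UNIV_domain Pi_iff\<close>)
    moreover have "u \<in> ?T" using u by auto
    moreover have "?T \<subseteq> topspace ?P - edge_shift E s t" using i by (auto simp: edge_shift_def) (metis)
    ultimately show "\<exists>T. openin ?P T \<and> u \<in> T \<and> T \<subseteq> topspace ?P - edge_shift E s t" by blast
  qed
  then have "closedin ?P (edge_shift E s t)"
    unfolding closedin_def by (auto simp: edge_shift_def PiE_UNIV_domain Pi_iff)
  then have "compactin ?P (edge_shift E s t)" using cP closedin_compact_space by blast
  then show ?thesis unfolding shift_topology_def by (rule compact_space_subtopology)
qed




definition compo :: "'e set \<Rightarrow> ('e \<Rightarrow> 'v) \<Rightarrow> ('e \<Rightarrow> 'v) \<Rightarrow> 'v \<Rightarrow> 'v set" where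
  "compo E s t v = {w. recurrent E s t w \<and> (v, w) \<in> (edge_rel E s t)\<^sup>+ \<and> (w, v) \<in> (edge_rel E s t)\<^sup>+}"

lemma is_component_compo: "is_component E s t C \<longleftrightarrow> (\<exists>v. recurrent E s t v \<and> C = compo E s t v)"
  unfolding is_component_def compo_def by simp

lemma edge_relI: "e \<in> E \<Longrightarrow> (s e, t e) \<in> edge_rel E s t"
  unfolding edge_rel_def by blast

lemma edge_relE: "(a, b) \<in> edge_rel E s t \<Longrightarrow> (\<And>e. e \<in> E \<Longrightarrow> a = s e \<Longrightarrow> b = t e \<Longrightarrow> P) \<Longrightarrow> P"
  unfolding edge_rel_def by blast

lemma compo_eq:
  assumes "(a, b) \<in> (edge_rel E s t)\<^sup>+" "(b, a) \<in> (edge_rel E s t)\<^sup>+"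
  shows "compo E s t a = compo E s t b"
  unfolding compo_def using assms by (auto intro: trancl_trans)

lemma in_compo:
  assumes "v \<in> compo E s t c" "(v, w) \<in> (edge_rel E s t)\<^sup>*" "(w, v) \<in> (edge_rel E s t)\<^sup>*"
  shows "w \<in> compo E s t c"
proof -
  let ?R = "edge_rel E s t"
  have cv: "(c, v) \<in> ?R\<^sup>+" and vc: "(v, c) \<in> ?R\<^sup>+" using assms(1) unfolding compo_def by auto
  have cw: "(c, w) \<in> ?R\<^sup>+" using cv assms(2) by (rule trancl_rtrancl_trancl)
  have wc: "(w, c) \<in> ?R\<^sup>+" using assms(3) vc by (rule rtrancl_trancl_trancl)
  have "(w, w) \<in> ?R\<^sup>+" using wc cw by (rule trancl_trans)
  then show ?thesis using cw wc unfolding compo_def recurrent_def by auto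
qed

lemma compo_conn:
  assumes "v \<in> compo E s t c" "w \<in> compo E s t c"
  shows "(v, w) \<in> (edge_rel E s t)\<^sup>+"
  using assms unfolding compo_def by (auto intro: trancl_trans)

lemma walk_recurrent:
  assumes "fin_digraph V E s t" "no_sinks_sources V E s t" "w \<in> V"
  shows "\<exists>u. (w, u) \<in> (edge_rel E s t)\<^sup>* \<and> recurrent E s t u"
proof -
  let ?R = "edge_rel E s t"
  define nxt where "nxt v = t (SOME e. e \<in> E \<and> s e = v)" for v
  have nx: "nxt v \<in> V \<and> (v, nxt v) \<in> ?R" if "v \<in> V" for v
  proof -
    have "\<exists>e\<in>E. s e = v" using assms(2) that unfolding no_sinks_sources_def by simp
    then obtain e where "e \<in> E \<and> s e = v" by (elim bexE) simp
    then have e: "(SOME e. e \<in> E \<and> s e = v) \<in> E \<and> s (SOME e. e \<in> E \<and> s e = v) = v"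
      by (rule someI[of "\<lambda>e. e \<in> E \<and> s e = v"])
    then have "(v, nxt v) \<in> ?R" unfolding nxt_def using edge_relI[of "SOME e. e \<in> E \<and> s e = v" E s t] by simp
    moreover have "nxt v \<in> V" using assms(1) e unfolding nxt_def fin_digraph_def by simp
    ultimately show ?thesis by simp
  qed
  define f where "f n = (nxt ^^ n) w" for n
  have fV: "f n \<in> V" for n
  proof (induction n)
    case 0 then show ?case using assms(3) by (simp add: f_def)
  next
    case (Suc n) then show ?case using nx[of "f n"] by (simp add: f_def)
  qed
  have fs: "(f n, f (Suc n)) \<in> ?R" for n using nx[OF fV[of n]] by (simp add: f_def)
  have fle: "(f i, f (i + k)) \<in> ?R\<^sup>*" for i k
  proof (induction k)
    case 0 then show ?case by simp
  next
    case (Suc k) then show ?case using rtrancl_into_rtrancl[OF Suc.IH fs[of "i+k"]] by simp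
  qed
  have flt: "(f i, f (i + Suc k)) \<in> ?R\<^sup>+" for i k
    using rtrancl_into_trancl1[OF fle[of i k] fs[of "i+k"]] by simp
  have "\<not> inj f"
  proof
    assume "inj f"
    moreover have "finite (range f)"
    proof (rule finite_subset)
      show "range f \<subseteq> V" using fV by (simp add: image_subset_iff)
      show "finite V" using assms(1) unfolding fin_digraph_def by simp
    qed
    ultimately have "finite (UNIV :: nat set)" by (intro finite_imageD[of f UNIV])
    then show False by simp
  qed
  then obtain i j where ij: "i \<noteq> j" "f i = f j" unfolding inj_def by auto
  have "\<exists>a b. a < b \<and> f a = f b"
  proof (cases "i < j")
    case True then show ?thesis using ij by (intro exI[of _ i] exI[of _ j]) simp
  next
    case False then have "j < i" using ij by simp
    then show ?thesis using ij by (intro exI[of _ j] exI[of _ i]) simp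
  qed
  then obtain a b where ab: "a < b" "f a = f b" by (elim exE conjE)
  obtain k where "b = Suc (a + k)" using less_imp_Suc_add[OF ab(1)] by (elim exE)
  then have "(f a, f a) \<in> ?R\<^sup>+" using flt[of a k] ab by simp
  moreover have "(w, f a) \<in> ?R\<^sup>*" using fle[of 0 a] by (simp add: f_def)
  ultimately show ?thesis unfolding recurrent_def by (intro exI[of _ "f a"] conjI)
qed

lemma forward_closed:
  assumes "fin_digraph V E s t" "no_sinks_sources V E s t" "terminal_component E s t C"
    and "v \<in> C" "(v, w) \<in> edge_rel E s t"
  shows "w \<in> C"
proof -
  let ?R = "edge_rel E s t"
  obtain c where c: "recurrent E s t c" "C = compo E s t c"
    using assms(3) unfolding terminal_component_def is_component_compo by blast
  have wV: "w \<in> V" using assms(1,5) unfolding fin_digraph_def by (auto elim: edge_relE)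
  obtain u where u: "(w, u) \<in> ?R\<^sup>*" "recurrent E s t u" using walk_recurrent[OF assms(1,2) wV] by blast
  have vu: "(v, u) \<in> ?R\<^sup>+" using assms(5) u(1) by (rule rtrancl_into_trancl2)
  have uu: "u \<in> compo E s t u" using u(2) unfolding compo_def recurrent_def by simp
  have "compo E s t u = C"
  proof (rule ccontr)
    assume ne: "compo E s t u \<noteq> C"
    have "is_component E s t (compo E s t u)" unfolding is_component_compo using u(2) by blast
    then have "\<forall>v\<in>C. \<forall>x\<in>compo E s t u. (v, x) \<notin> ?R\<^sup>+" using assms(3) ne unfolding terminal_component_def by blast
    then show False using assms(4) uu vu by blast
  qed
  then have uC: "u \<in> C" using uu by simp
  have "(u, v) \<in> ?R\<^sup>+" using compo_conn[of u E s t c v] uC assms(4) c(2) by simp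
  then have "(w, v) \<in> ?R\<^sup>*" using u(1) by (meson rtrancl_trans trancl_into_rtrancl)
  then show ?thesis using in_compo[of v E s t c w] assms(4,5) c(2) by auto
qed

lemma reach_terminal:
  assumes "fin_digraph V E s t" "no_sinks_sources V E s t" "terminal_component E s t C"
    and uniq: "\<forall>D. terminal_component E s t D \<longrightarrow> D = C"
    and "w \<in> V"
  shows "\<exists>c\<in>C. (w, c) \<in> (edge_rel E s t)\<^sup>*"
proof -
  let ?R = "edge_rel E s t"
  define reach where "reach u = {x. (u, x) \<in> ?R\<^sup>*}" for u
  have fin_reach: "finite (reach u)" for u
  proof -
    have "reach u \<subseteq> insert u V"
    proof
      fix x assume "x \<in> reach u"
      then have "(u, x) \<in> ?R\<^sup>*" unfolding reach_def by simp
      then show "x \<in> insert u V"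
      proof (induction rule: rtrancl_induct)
        case base then show ?case by simp
      next
        case (step y z) then show ?case using assms(1) unfolding fin_digraph_def by (auto elim: edge_relE)
      qed
    qed
    then show ?thesis using assms(1) unfolding fin_digraph_def by (meson finite_insert finite_subset)
  qed
  define P where "P u = ((w, u) \<in> ?R\<^sup>* \<and> recurrent E s t u)" for u
  obtain u0 where "P u0" using walk_recurrent[OF assms(1,2,5)] unfolding P_def by blast
  then obtain u where Pu: "P u" and umin: "\<And>u'. P u' \<Longrightarrow> card (reach u) \<le> card (reach u')"
    using ex_has_least_nat[of P u0 "\<lambda>u. card (reach u)"] by blast
  let ?D = "compo E s t u"
  have uu: "u \<in> ?D" using Pu unfolding P_def compo_def recurrent_def by simp
  have Dc: "is_component E s t ?D" unfolding is_component_compo using Pu P_def by blast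
  have "terminal_component E s t ?D"
    unfolding terminal_component_def
  proof (intro conjI Dc allI impI ballI)
    fix D' v x assume D': "is_component E s t D' \<and> D' \<noteq> ?D" and v: "v \<in> ?D" and x: "x \<in> D'"
    show "(v, x) \<notin> ?R\<^sup>+"
    proof
      assume vx: "(v, x) \<in> ?R\<^sup>+"
      obtain c' where c': "recurrent E s t c'" "D' = compo E s t c'" using D' is_component_compo by metis
      have xrec: "recurrent E s t x" using x c'(2) unfolding compo_def by simp
      have uv: "(u, v) \<in> ?R\<^sup>+" using v unfolding compo_def by simp
      have ux: "(u, x) \<in> ?R\<^sup>+" using uv vx by (rule trancl_trans)
      have "P x" unfolding P_def using Pu ux xrec unfolding P_def
        by (meson rtrancl_trans trancl_into_rtrancl)
      then have le: "card (reach u) \<le> card (reach x)" by (rule umin)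
      have sub: "reach x \<subseteq> reach u" unfolding reach_def using ux
        by (auto intro: rtrancl_trans dest: trancl_into_rtrancl)
      have "reach x = reach u" using card_subset_eq[OF fin_reach sub] le card_mono[OF fin_reach sub] by simp
      then have "(x, u) \<in> ?R\<^sup>*" unfolding reach_def by auto
      then have xu: "(x, u) \<in> ?R\<^sup>+" using trancl_rtrancl_trancl[OF xrec[unfolded recurrent_def]] by simp
      have "compo E s t x = ?D" using compo_eq[OF xu ux] .
      moreover have "compo E s t x = D'"
      proof -
        have "(c', x) \<in> ?R\<^sup>+" "(x, c') \<in> ?R\<^sup>+" using x c'(2) unfolding compo_def by auto
        then show ?thesis using compo_eq c'(2) by metis
      qed
      ultimately show False using D' by simp
    qed
  qed
  then have "?D = C" using uniq by blast
  then show ?thesis using uu Pu unfolding P_def by blast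
qed

lemma path_of_rtrancl:
  assumes "(a, b) \<in> (edge_rel E s t)\<^sup>*"
  shows "\<exists>L g. (\<forall>k<L. g k \<in> E) \<and> (\<forall>k. Suc k < L \<longrightarrow> t (g k) = s (g (Suc k)))
           \<and> (L = 0 \<longrightarrow> a = b) \<and> (0 < L \<longrightarrow> s (g 0) = a \<and> t (g (L - 1)) = b)
           \<and> (\<forall>k<L. (a, s (g k)) \<in> (edge_rel E s t)\<^sup>* \<and> (t (g k), b) \<in> (edge_rel E s t)\<^sup>*)"
  using assms
proof (induction rule: converse_rtrancl_induct)
  case base
  then show ?case by (intro exI[of _ 0]) auto
next
  case (step a c)
  obtain L g where g: "\<forall>k<L. g k \<in> E" "\<forall>k. Suc k < L \<longrightarrow> t (g k) = s (g (Suc k))"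
    "L = 0 \<longrightarrow> c = b" "0 < L \<longrightarrow> s (g 0) = c \<and> t (g (L - 1)) = b"
    "\<forall>k<L. (c, s (g k)) \<in> (edge_rel E s t)\<^sup>* \<and> (t (g k), b) \<in> (edge_rel E s t)\<^sup>*"
    using step.IH by blast
  obtain e where e: "e \<in> E" "a = s e" "c = t e" using step.hyps(1) by (auto elim: edge_relE)
  define g' where "g' k = (if k = 0 then e else g (k - 1))" for k
  show ?case
  proof (intro exI[of _ "Suc L"] exI[of _ g'] conjI allI impI)
    fix k assume "k < Suc L" then show "g' k \<in> E" using g(1) e(1) by (auto simp: g'_def)
  next
    fix k assume k: "Suc k < Suc L"
    show "t (g' k) = s (g' (Suc k))"
    proof (cases k)
      case 0 then show ?thesis using g(3,4) e k by (cases L) (auto simp: g'_def)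
    next
      case (Suc k') then show ?thesis using g(2) k by (auto simp: g'_def)
    qed
  next
    show "s (g' 0) = a" using e by (simp add: g'_def)
  next
    show "t (g' (Suc L - 1)) = b" using g(3,4) e by (cases L) (auto simp: g'_def)
  next
    fix k assume k: "k < Suc L"
    show "(a, s (g' k)) \<in> (edge_rel E s t)\<^sup>*"
    proof (cases k)
      case 0 then show ?thesis using e by (simp add: g'_def)
    next
      case (Suc k') then show ?thesis using g(5) k step.hyps(1) by (auto simp: g'_def intro: converse_rtrancl_into_rtrancl)
    qed
    show "(t (g' k), b) \<in> (edge_rel E s t)\<^sup>*"
    proof (cases k)
      case 0 then show ?thesis using e step.hyps(2) by (simp add: g'_def)
    next
      case (Suc k') then show ?thesis using g(5) k by (auto simp: g'_def)
    qed
  qed simp_all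
qed




definition bk :: "nat \<Rightarrow> (int \<Rightarrow> 'a) \<Rightarrow> (int \<Rightarrow> 'a)" where
  "bk n x = (\<lambda>i. x (i - int n))"

definition shn :: "nat \<Rightarrow> (int \<Rightarrow> 'a) \<Rightarrow> (int \<Rightarrow> 'a)" where
  "shn n x = (\<lambda>i. x (i + int n))"

definition hits :: "(int \<Rightarrow> 'a) topology \<Rightarrow> (int \<Rightarrow> 'a) \<Rightarrow> (int \<Rightarrow> 'a) set \<Rightarrow> bool" where
  "hits T z Y = (\<exists>w\<in>Y. \<forall>U. openin T U \<and> w \<in> U \<longrightarrow> (\<forall>n0. \<exists>n\<ge>n0. bk n z \<in> U))"

definition absorbing :: "(int \<Rightarrow> 'a) topology \<Rightarrow> (int \<Rightarrow> 'a) set \<Rightarrow> bool" where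
  "absorbing T Y = (\<forall>z\<in>topspace T. hits T z Y \<longrightarrow> z \<in> Y)"

definition good :: "'e set \<Rightarrow> ('e \<Rightarrow> 'v) \<Rightarrow> ('e \<Rightarrow> 'v) \<Rightarrow> (int \<Rightarrow> 'e) set \<Rightarrow> bool" where
  "good E s t Y = (Y \<subseteq> edge_shift E s t \<and> closedin (shift_topology E s t) Y \<and> Y \<noteq> {} \<and>
     (\<forall>y\<in>Y. shift y \<in> Y) \<and> (\<forall>y\<in>Y. bk 1 y \<in> Y) \<and> absorbing (shift_topology E s t) Y)"

lemma bk_X: assumes "x \<in> edge_shift E s t" shows "bk n x \<in> edge_shift E s t"
  unfolding edge_shift_def bk_def
proof (intro CollectI allI conjI)
  fix i
  have h: "x (i - int n) \<in> E \<and> t (x (i - int n)) = s (x ((i - int n) + 1))"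
    using assms unfolding edge_shift_def by simp
  show "x (i - int n) \<in> E" using h by simp
  have "(i - int n) + 1 = i + 1 - int n" by simp
  then show "t (x (i - int n)) = s (x (i + 1 - int n))" using h by metis
qed

lemma shn_X: assumes "x \<in> edge_shift E s t" shows "shn n x \<in> edge_shift E s t"
  unfolding edge_shift_def shn_def
proof (intro CollectI allI conjI)
  fix i
  have h: "x (i + int n) \<in> E \<and> t (x (i + int n)) = s (x ((i + int n) + 1))"
    using assms unfolding edge_shift_def by simp
  show "x (i + int n) \<in> E" using h by simp
  have "(i + int n) + 1 = i + 1 + int n" by simp
  then show "t (x (i + int n)) = s (x (i + 1 + int n))" using h by metis
qed

lemma shift_shn1: "shift x = shn 1 x"
  unfolding shift_def shn_def by simp

lemma shift_X: "x \<in> edge_shift E s t \<Longrightarrow> shift x \<in> edge_shift E s t"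
  unfolding shift_shn1 by (rule shn_X)

lemma bk_Suc: "bk (Suc n) x = bk 1 (bk n x)"
  unfolding bk_def by (simp add: algebra_simps)

lemma shn_Suc: "shn (Suc n) x = shift (shn n x)"
  unfolding shn_def shift_def by (simp add: algebra_simps)

lemma bk_0: "bk 0 x = x" unfolding bk_def by simp
lemma shn_0: "shn 0 x = x" unfolding shn_def by simp

lemma shift_bk1: "shift (bk 1 x) = x" unfolding shift_def bk_def by simp
lemma bk1_shift: "bk 1 (shift x) = x" unfolding shift_def bk_def by simp

lemma inv_bk: assumes "\<forall>y\<in>Y. bk 1 y \<in> Y" "y \<in> Y" shows "bk n y \<in> Y"
proof (induction n)
  case 0 then show ?case using assms(2) by (simp add: bk_0)
next
  case (Suc n)
  have "bk 1 (bk n y) \<in> Y" using assms(1) Suc.IH by blast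
  then show ?case unfolding bk_Suc[of n y] .
qed

lemma inv_shn: assumes "\<forall>y\<in>Y. shift y \<in> Y" "y \<in> Y" shows "shn n y \<in> Y"
proof (induction n)
  case 0 then show ?case using assms(2) by (simp add: shn_0)
next
  case (Suc n)
  have "shift (shn n y) \<in> Y" using assms(1) Suc.IH by blast
  then show ?case unfolding shn_Suc[of n y] .
qed

lemma sub_edges_sub: "sub_edges E s t C \<subseteq> E"
  unfolding sub_edges_def by auto

lemma XC_sub: "edge_shift (sub_edges E s t C) s t \<subseteq> edge_shift E s t"
  unfolding edge_shift_def sub_edges_def by auto

lemma XC_closed: "closedin (shift_topology E s t) (edge_shift (sub_edges E s t C) s t)"
proof -
  let ?T = "shift_topology E s t" and ?XC = "edge_shift (sub_edges E s t C) s t"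
  have "openin ?T (topspace ?T - ?XC)"
  proof (subst openin_subopen, intro ballI)
    fix u assume u: "u \<in> topspace ?T - ?XC"
    then have uX: "u \<in> edge_shift E s t" by (simp add: topspace_shift)
    have "\<exists>i. u i \<notin> sub_edges E s t C"
    proof (rule ccontr)
      assume "\<not> (\<exists>i. u i \<notin> sub_edges E s t C)"
      then have "u \<in> ?XC" using uX unfolding edge_shift_def by simp
      then show False using u by simp
    qed
    then obtain i where i: "u i \<notin> sub_edges E s t C" by (elim exE)
    let ?S = "{v \<in> edge_shift E s t. \<forall>j\<in>{i}. v j \<in> E - sub_edges E s t C}"
    have "openin ?T ?S" by (rule open_coord_shift) auto
    moreover have "u \<in> ?S" using uX i unfolding edge_shift_def by simp
    moreover have "?S \<subseteq> topspace ?T - ?XC" unfolding topspace_shift edge_shift_def by auto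
    ultimately show "\<exists>T. openin ?T T \<and> u \<in> T \<and> T \<subseteq> topspace ?T - ?XC" by (intro exI conjI)
  qed
  then show ?thesis unfolding closedin_def topspace_shift using XC_sub by (intro conjI)
qed

lemma XC_nonempty:
  assumes "terminal_component E s t C"
  shows "edge_shift (sub_edges E s t C) s t \<noteq> {}"
proof -
  let ?R = "edge_rel E s t"
  obtain c where c: "recurrent E s t c" "C = compo E s t c"
    using assms unfolding terminal_component_def is_component_compo by (elim conjE exE) simp
  have "(c, c) \<in> ?R\<^sup>+" using c(1) unfolding recurrent_def .
  then obtain d where d: "(c, d) \<in> ?R" "(d, c) \<in> ?R\<^sup>*" using tranclD[OF \<open>(c, c) \<in> ?R\<^sup>+\<close>] by (elim exE conjE)
  obtain e where e: "e \<in> E" "c = s e" "d = t e" using d(1) by (rule edge_relE)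
  obtain L g where g: "\<forall>k<L. g k \<in> E" "\<forall>k. Suc k < L \<longrightarrow> t (g k) = s (g (Suc k))"
           "L = 0 \<longrightarrow> d = c" "0 < L \<longrightarrow> s (g 0) = d \<and> t (g (L - 1)) = c"
           "\<forall>k<L. (d, s (g k)) \<in> ?R\<^sup>* \<and> (t (g k), c) \<in> ?R\<^sup>*"
    using path_of_rtrancl[OF d(2)] by blast
  define h where "h k = (if k = 0 then e else g (k - 1))" for k
  define M where "M = Suc L"
  have hE: "h k \<in> E" if "k < M" for k using that g(1) e(1) unfolding h_def M_def by auto
  have hc: "t (h k) = s (h (Suc k))" if "Suc k < M" for k
  proof (cases k)
    case 0 then show ?thesis using g(3,4) e that unfolding h_def M_def by (cases L) auto
  next
    case (Suc k') then show ?thesis using g(2) that unfolding h_def M_def by auto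
  qed
  have hwrap: "t (h (M - 1)) = s (h 0)"
    using g(3,4) e unfolding h_def M_def by (cases L) auto
  have cC: "c \<in> C" using c unfolding compo_def recurrent_def by simp
  have inC: "s (h k) \<in> C \<and> t (h k) \<in> C" if "k < M" for k
  proof -
    have a1: "(c, s (h k)) \<in> ?R\<^sup>* \<and> (t (h k), c) \<in> ?R\<^sup>*"
    proof (cases k)
      case 0 then show ?thesis using e d(2) unfolding h_def by simp
    next
      case (Suc k')
      then have "k' < L" using that M_def by simp
      then have "(d, s (g k')) \<in> ?R\<^sup>* \<and> (t (g k'), c) \<in> ?R\<^sup>*" using g(5) by simp
      moreover have "(c, d) \<in> ?R\<^sup>*" using d(1) by simp
      moreover have "h k = g k'" unfolding h_def using Suc by simp
      ultimately show ?thesis using rtrancl_trans[of c d ?R "s (g k')"] by simp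
    qed
    have ed: "(s (h k), t (h k)) \<in> ?R" using hE[OF that] by (rule edge_relI)
    have sc: "(s (h k), c) \<in> ?R\<^sup>*" using ed a1 by (meson converse_rtrancl_into_rtrancl)
    have ct: "(c, t (h k)) \<in> ?R\<^sup>*" using ed a1 by (meson rtrancl_into_rtrancl)
    show ?thesis using in_compo[of c E s t c] cC c(2) a1 sc ct by simp
  qed
  define x where "x i = h (nat (i mod int M))" for i
  have Mpos: "0 < M" unfolding M_def by simp
  have xi: "x i \<in> sub_edges E s t C \<and> t (x i) = s (x (i + 1))" for i
  proof -
    define r where "r = i mod int M"
    define k where "k = nat r"
    have r0: "0 \<le> r" and rM: "r < int M" unfolding r_def using Mpos by simp_all
    have kM: "k < M" unfolding k_def using r0 rM by simp
    have rk: "r = int k" unfolding k_def using r0 by simp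
    have r1: "(i + 1) mod int M = (r + 1) mod int M" unfolding r_def by (simp add: mod_add_left_eq)
    have "x i \<in> sub_edges E s t C" unfolding x_def sub_edges_def using hE[OF kM] inC[OF kM] k_def r_def by simp
    moreover have "t (x i) = s (x (i + 1))"
    proof (cases "Suc k < M")
      case True
      have "(r + 1) mod int M = r + 1" using True rk r0 by (intro mod_pos_pos_trivial) simp_all
      then have "nat ((i + 1) mod int M) = Suc k" using r1 rk by simp
      then show ?thesis unfolding x_def using hc[OF True] k_def r_def by simp
    next
      case False
      then have kk: "Suc k = M" using kM by simp
      then have "r + 1 = int M" using rk by simp
      then have "(i + 1) mod int M = 0" using r1 by simp
      moreover have "k = M - 1" using kk by simp
      ultimately show ?thesis unfolding x_def using hwrap k_def r_def by simp
    qed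
    ultimately show ?thesis by simp
  qed
  then have "x \<in> edge_shift (sub_edges E s t C) s t" unfolding edge_shift_def by simp
  then show ?thesis by (intro notI) simp
qed




lemma XC_absorbing:
  assumes fg: "fin_digraph V E s t" and ns: "no_sinks_sources V E s t" and tc: "terminal_component E s t C"
  shows "absorbing (shift_topology E s t) (edge_shift (sub_edges E s t C) s t)"
  unfolding absorbing_def
proof (intro ballI impI)
  let ?T = "shift_topology E s t" and ?XC = "edge_shift (sub_edges E s t C) s t" and ?S = "sub_edges E s t C"
  fix z assume zT: "z \<in> topspace ?T" and h: "hits ?T z ?XC"
  have zX: "z \<in> edge_shift E s t" using zT by (simp add: topspace_shift)
  obtain w where w: "w \<in> ?XC" and hw: "\<forall>U. openin ?T U \<and> w \<in> U \<longrightarrow> (\<forall>n0. \<exists>n\<ge>n0. bk n z \<in> U)"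
    using h unfolding hits_def by (elim bexE) simp
  let ?U = "{u \<in> edge_shift E s t. \<forall>j\<in>{0}. u j \<in> ?S}"
  have Uo: "openin ?T ?U" by (rule open_coord_shift) (simp_all add: sub_edges_sub)
  have wU: "w \<in> ?U" using w XC_sub[of E s t C] unfolding edge_shift_def by auto
  have key: "\<exists>n\<ge>n0. z (- int n) \<in> ?S" for n0
  proof -
    obtain n where "n \<ge> n0" "bk n z \<in> ?U" using hw Uo wU by blast
    then show ?thesis unfolding bk_def by auto
  qed
  have zE: "z j \<in> E \<and> t (z j) = s (z (j + 1))" for j using zX unfolding edge_shift_def by simp
  have step: "z (j + 1) \<in> ?S" if "z j \<in> ?S" for j
  proof -
    have "t (z j) \<in> C" using that unfolding sub_edges_def by simp
    then have sC: "s (z (j + 1)) \<in> C" using zE[of j] by simp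
    have "(s (z (j + 1)), t (z (j + 1))) \<in> edge_rel E s t" using zE[of "j+1"] by (intro edge_relI) simp
    then have "t (z (j + 1)) \<in> C" using forward_closed[OF fg ns tc sC] by simp
    then show ?thesis using sC zE[of "j+1"] unfolding sub_edges_def by simp
  qed
  have allS: "z i \<in> ?S" for i
  proof -
    obtain n where n: "n \<ge> nat (- i)" "z (- int n) \<in> ?S" using key by blast
    have ind: "z (- int n + int m) \<in> ?S" for m
    proof (induction m)
      case 0 then show ?case using n(2) by simp
    next
      case (Suc m)
      have "z (- int n + int m + 1) \<in> ?S" using step[OF Suc.IH] .
      moreover have "- int n + int m + 1 = - int n + int (Suc m)" by simp
      ultimately show ?case by metis
    qed
    have "i + int n \<ge> 0" using n(1) by simp
    then have "- int n + int (nat (i + int n)) = i" by simp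
    then show ?thesis using ind[of "nat (i + int n)"] by simp
  qed
  show "z \<in> ?XC" unfolding edge_shift_def using allS zE by simp
qed

lemma XC_good:
  assumes fg: "fin_digraph V E s t" and ns: "no_sinks_sources V E s t" and tc: "terminal_component E s t C"
  shows "good E s t (edge_shift (sub_edges E s t C) s t)"
  unfolding good_def
proof (intro conjI ballI)
  show "edge_shift (sub_edges E s t C) s t \<subseteq> edge_shift E s t" by (rule XC_sub)
  show "closedin (shift_topology E s t) (edge_shift (sub_edges E s t C) s t)" by (rule XC_closed)
  show "edge_shift (sub_edges E s t C) s t \<noteq> {}" by (rule XC_nonempty[OF tc])
  fix y assume "y \<in> edge_shift (sub_edges E s t C) s t"
  then show "shift y \<in> edge_shift (sub_edges E s t C) s t" by (rule shift_X)
next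
  fix y assume "y \<in> edge_shift (sub_edges E s t C) s t"
  then show "bk 1 y \<in> edge_shift (sub_edges E s t C) s t" by (rule bk_X)
next
  show "absorbing (shift_topology E s t) (edge_shift (sub_edges E s t C) s t)"
    by (rule XC_absorbing[OF fg ns tc])
qed




lemma XC_least:
  assumes fg: "fin_digraph V E s t" and ns: "no_sinks_sources V E s t" and tc: "terminal_component E s t C"
    and uniq: "\<forall>D. terminal_component E s t D \<longrightarrow> D = C"
    and gY: "good E s t Y"
  shows "edge_shift (sub_edges E s t C) s t \<subseteq> Y"
proof
  let ?T = "shift_topology E s t" and ?X = "edge_shift E s t" and ?S = "sub_edges E s t C"
  let ?R = "edge_rel E s t"
  have YX: "Y \<subseteq> ?X" and Ycl: "closedin ?T Y" and Yne: "Y \<noteq> {}" and Ysh: "\<forall>y\<in>Y. shift y \<in> Y"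
    and Ybk: "\<forall>y\<in>Y. bk 1 y \<in> Y" and Yab: "absorbing ?T Y"
    using gY unfolding good_def by simp_all
  fix x assume xXC: "x \<in> edge_shift ?S s t"
  show "x \<in> Y"
  proof (rule ccontr)
    assume xY: "x \<notin> Y"
    have xX: "x \<in> ?X" using XC_sub[of E s t C] xXC by (rule subsetD)
    have xS: "x i \<in> ?S" and xc: "t (x i) = s (x (i + 1))" for i using xXC unfolding edge_shift_def by simp_all
    have xE: "x i \<in> E" for i using xX unfolding edge_shift_def by simp
    have opn: "openin ?T (?X - Y)" using Ycl unfolding closedin_def topspace_shift by simp
    obtain N where N: "cyl E s t x N \<subseteq> ?X - Y" using nbhd_cyl[OF opn] xX xY by blast
    obtain y where yY: "y \<in> Y" using Yne by blast
    have yX: "y \<in> ?X" using YX yY by (rule subsetD)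
    have yE: "y i \<in> E" and yc: "t (y i) = s (y (i + 1))" for i using yX unfolding edge_shift_def by simp_all
    have ty0V: "t (y 0) \<in> V" using fg yE[of 0] unfolding fin_digraph_def by simp
    obtain c where cC: "c \<in> C" and yc0: "(t (y 0), c) \<in> ?R\<^sup>*"
      using reach_terminal[OF fg ns tc uniq ty0V] by blast
    obtain c0 where c0: "C = compo E s t c0"
      using tc unfolding terminal_component_def is_component_compo by (elim conjE exE) simp
    have sxC: "s (x (- int N)) \<in> C" using xS[of "- int N"] unfolding sub_edges_def by simp
    have "(c, s (x (- int N))) \<in> ?R\<^sup>+" using compo_conn[of c E s t c0 "s (x (- int N))"] cC sxC c0 by simp
    then have reach: "(t (y 0), s (x (- int N))) \<in> ?R\<^sup>*" using yc0 by (meson rtrancl_trans trancl_into_rtrancl)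
    obtain L g where g: "\<forall>k<L. g k \<in> E" "\<forall>k. Suc k < L \<longrightarrow> t (g k) = s (g (Suc k))"
           "L = 0 \<longrightarrow> t (y 0) = s (x (- int N))"
           "0 < L \<longrightarrow> s (g 0) = t (y 0) \<and> t (g (L - 1)) = s (x (- int N))"
      using path_of_rtrancl[OF reach] by blast
    define z where "z i = (if i \<le> 0 then y i else if i \<le> int L then g (nat (i - 1)) else x (i - int L - 1 - int N))" for i
    have zE: "z i \<in> E" for i
    proof -
      consider "i \<le> 0" | "0 < i \<and> i \<le> int L" | "int L < i" by linarith
      then show ?thesis
      proof cases
        case 1 then show ?thesis using yE unfolding z_def by simp
      next
        case 2 then have "nat (i - 1) < L" by (simp add: nat_less_iff)
        then show ?thesis using 2 g(1) unfolding z_def by simp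
      next
        case 3 then show ?thesis using xE unfolding z_def by simp
      qed
    qed
    have zc: "t (z i) = s (z (i + 1))" for i
    proof -
      consider "i < 0" | "i = 0" "L = 0" | "i = 0" "0 < L" | "0 < i \<and> i < int L" | "0 < i \<and> i = int L" | "int L < i \<and> 0 < i" by linarith
      then show ?thesis
      proof cases
        case 1 then show ?thesis using yc[of i] unfolding z_def by simp
      next
        case 2
        have "z (i + 1) = x (- int N)" unfolding z_def using 2 by simp
        then show ?thesis using g(3) 2 unfolding z_def by simp
      next
        case 3
        have "z (i + 1) = g 0" unfolding z_def using 3 by simp
        then show ?thesis using g(4) 3 unfolding z_def by simp
      next
        case 4
        have a: "z i = g (nat (i - 1))" unfolding z_def using 4 by simp
        have sn: "nat (i + 1 - 1) = Suc (nat (i - 1))" using 4 by (simp add: Suc_nat_eq_nat_zadd1)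
        have b: "z (i + 1) = g (Suc (nat (i - 1)))" unfolding z_def using 4 sn by simp
        have "Suc (nat (i - 1)) = nat i" using 4 by (simp add: Suc_nat_eq_nat_zadd1)
        then have "Suc (nat (i - 1)) < L" using 4 by (simp add: nat_less_iff)
        then show ?thesis using g(2) a b by simp
      next
        case 5
        have L1: "0 < L" using 5 by simp
        have "i - 1 = int (L - 1)" using 5 L1 by (simp add: of_nat_diff)
        then have sn: "nat (i - 1) = L - 1" by simp
        have a: "z i = g (L - 1)" unfolding z_def using 5 sn by simp
        have b: "z (i + 1) = x (- int N)" unfolding z_def using 5 by simp
        have "0 < L" using 5 by simp
        then show ?thesis using g(4) a b by simp
      next
        case 6
        have a: "z i = x (i - int L - 1 - int N)" unfolding z_def using 6 by simp
        have b: "z (i + 1) = x ((i - int L - 1 - int N) + 1)" unfolding z_def using 6 by (simp add: algebra_simps)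
        show ?thesis using xc a b by simp
      qed
    qed
    have zX: "z \<in> ?X" unfolding edge_shift_def using zE zc by simp
    have hz: "hits ?T z Y"
    proof (rule ccontr)
      assume nh: "\<not> hits ?T z Y"
      have ex: "\<exists>M. \<forall>n\<ge>M. bk n z \<notin> cyl E s t w M" if wY: "w \<in> Y" for w
      proof -
        obtain U n0 where U: "openin ?T U" "w \<in> U" and n0: "\<forall>n\<ge>n0. bk n z \<notin> U"
          using nh wY unfolding hits_def by (metis not_le_imp_less order.strict_implies_order)
        obtain N' where N': "cyl E s t w N' \<subseteq> U" using nbhd_cyl[OF U] by blast
        have "cyl E s t w (max N' n0) \<subseteq> U" using cyl_mono[of N' "max N' n0" E s t w] N' by simp
        then show ?thesis using n0 by (intro exI[of _ "max N' n0"]) auto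
      qed
      have ex': "\<forall>w\<in>Y. \<exists>M. \<forall>n\<ge>M. bk n z \<notin> cyl E s t w M" using ex by (intro ballI)
      obtain Mf where Mf: "\<forall>w\<in>Y. \<forall>n\<ge>Mf w. bk n z \<notin> cyl E s t w (Mf w)"
        using bchoice[OF ex'] by (elim exE)
      have finE: "finite E" using fg unfolding fin_digraph_def by simp
      have cY: "compactin ?T Y" using closedin_compact_space[OF compact_shift[OF finE] Ycl] .
      have opens: "\<forall>B\<in>(\<lambda>w. cyl E s t w (Mf w)) ` Y. openin ?T B"
        using YX cyl_open by blast
      have cov: "Y \<subseteq> \<Union>((\<lambda>w. cyl E s t w (Mf w)) ` Y)"
        using YX cyl_self by fastforce
      obtain \<V> where V: "finite \<V>" "\<V> \<subseteq> (\<lambda>w. cyl E s t w (Mf w)) ` Y" "Y \<subseteq> \<Union>\<V>"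
        using cY opens cov unfolding compactin_def by meson
      obtain W where W: "W \<subseteq> Y" "finite W" "\<V> = (\<lambda>w. cyl E s t w (Mf w)) ` W"
        using finite_subset_image[OF V(1,2)] by blast
      define M where "M = Max (insert 0 (Mf ` W))"
      have MfM: "Mf w \<le> M" if "w \<in> W" for w unfolding M_def using W(2) that by simp
      have "bk M y \<in> Y" using inv_bk[OF Ybk yY] .
      then obtain w where wW: "w \<in> W" and bw: "bk M y \<in> cyl E s t w (Mf w)" using V(3) W(3) by blast
      have "bk M z \<in> cyl E s t w (Mf w)"
        unfolding cyl_def
      proof (intro CollectI conjI allI impI)
        show "bk M z \<in> ?X" using zX by (rule bk_X)
        fix i :: int assume i: "\<bar>i\<bar> \<le> int (Mf w)"
        then have "i - int M \<le> 0" using MfM[OF wW] by simp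
        then have "bk M z i = bk M y i" unfolding bk_def z_def by simp
        also have "\<dots> = w i" using bw i unfolding cyl_def by simp
        finally show "bk M z i = w i" .
      qed
      moreover have "\<forall>n\<ge>Mf w. bk n z \<notin> cyl E s t w (Mf w)" using Mf wW W(1) by blast
      ultimately show False using MfM[OF wW] by blast
    qed
    have zY: "z \<in> Y" using Yab zX hz unfolding absorbing_def topspace_shift by blast
    define k where "k = L + 1 + N"
    have kY: "shn k z \<in> Y" using inv_shn[OF Ysh zY] .
    have "shn k z \<in> cyl E s t x N"
      unfolding cyl_def
    proof (intro CollectI conjI allI impI)
      show "shn k z \<in> ?X" using zX by (rule shn_X)
      fix i :: int assume i: "\<bar>i\<bar> \<le> int N"
      have i1: "\<not> (i + int L + 1 + int N \<le> 0)" "\<not> (i + int L + 1 + int N \<le> int L)" using i by (simp_all add: abs_le_iff)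
      have "shn k z i = z (i + int L + 1 + int N)" unfolding shn_def k_def by (simp add: algebra_simps)
      also have "\<dots> = x i" unfolding z_def using i1 by simp
      finally show "shn k z i = x i" .
    qed
    then show False using N kY by blast
  qed
qed




lemma conj_inverse:
  assumes "conjugacy E s t F s' t' \<phi>"
  shows "\<exists>\<psi>. conjugacy F s' t' E s t \<psi> \<and> (\<forall>x\<in>edge_shift E s t. \<psi> (\<phi> x) = x \<and> \<phi> x \<in> edge_shift F s' t')
            \<and> (\<forall>y\<in>edge_shift F s' t'. \<phi> (\<psi> y) = y \<and> \<psi> y \<in> edge_shift E s t)"
proof -
  have hm: "homeomorphic_map (shift_topology E s t) (shift_topology F s' t') \<phi>"
    and cm: "\<forall>x\<in>edge_shift E s t. \<phi> (shift x) = shift (\<phi> x)"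
    using assms unfolding conjugacy_def by simp_all
  obtain \<psi> where hms: "homeomorphic_maps (shift_topology E s t) (shift_topology F s' t') \<phi> \<psi>"
    using hm unfolding homeomorphic_map_maps by (elim exE)
  have h2: "homeomorphic_map (shift_topology F s' t') (shift_topology E s t) \<psi>"
    using hms unfolding homeomorphic_maps_map by simp
  have inv1: "\<forall>x\<in>edge_shift E s t. \<psi> (\<phi> x) = x" and inv2: "\<forall>y\<in>edge_shift F s' t'. \<phi> (\<psi> y) = y"
    using hms unfolding homeomorphic_maps_map topspace_shift by simp_all
  have m1: "\<phi> x \<in> edge_shift F s' t'" if "x \<in> edge_shift E s t" for x
    using homeomorphic_imp_surjective_map[OF hm] that unfolding topspace_shift by blast
  have m2: "\<psi> y \<in> edge_shift E s t" if "y \<in> edge_shift F s' t'" for y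
    using homeomorphic_imp_surjective_map[OF h2] that unfolding topspace_shift by blast
  have cm2: "\<forall>y\<in>edge_shift F s' t'. \<psi> (shift y) = shift (\<psi> y)"
  proof
    fix y assume y: "y \<in> edge_shift F s' t'"
    let ?x = "\<psi> y"
    have x: "?x \<in> edge_shift E s t" using m2[OF y] .
    have "shift y = \<phi> (shift ?x)" using cm x inv2 y by simp
    then have "\<psi> (shift y) = \<psi> (\<phi> (shift ?x))" by simp
    also have "\<dots> = shift ?x" using inv1 shift_X[OF x] by simp
    finally show "\<psi> (shift y) = shift (\<psi> y)" .
  qed
  show ?thesis unfolding conjugacy_def using h2 cm2 inv1 inv2 m1 m2 by (intro exI[of _ \<psi>]) simp
qed

lemma conj_bk1:
  assumes "conjugacy E s t F s' t' \<phi>" "x \<in> edge_shift E s t"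
  shows "\<phi> (bk 1 x) = bk 1 (\<phi> x)"
proof -
  have cm: "\<forall>x\<in>edge_shift E s t. \<phi> (shift x) = shift (\<phi> x)" using assms(1) unfolding conjugacy_def by simp
  have "\<phi> x = \<phi> (shift (bk 1 x))" unfolding shift_bk1 ..
  also have "\<dots> = shift (\<phi> (bk 1 x))" using cm bk_X[OF assms(2)] by simp
  finally have "bk 1 (\<phi> x) = bk 1 (shift (\<phi> (bk 1 x)))" by simp
  then show ?thesis unfolding bk1_shift by simp
qed

lemma conj_bk:
  assumes "conjugacy E s t F s' t' \<phi>" "x \<in> edge_shift E s t"
  shows "\<phi> (bk n x) = bk n (\<phi> x)"
proof (induction n)
  case 0 then show ?case by (simp add: bk_0)
next
  case (Suc n)
  have "\<phi> (bk (Suc n) x) = \<phi> (bk 1 (bk n x))" unfolding bk_Suc[of n x] ..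
  also have "\<dots> = bk 1 (\<phi> (bk n x))" using conj_bk1[OF assms(1) bk_X[OF assms(2)]] .
  also have "\<dots> = bk 1 (bk n (\<phi> x))" using Suc.IH by simp
  also have "\<dots> = bk (Suc n) (\<phi> x)" unfolding bk_Suc[of n "\<phi> x"] ..
  finally show ?case .
qed

lemma good_transfer:
  assumes cj: "conjugacy E s t F s' t' \<phi>" and gY: "good E s t Y"
  shows "good F s' t' (\<phi> ` Y)"
proof -
  let ?T = "shift_topology E s t" and ?T' = "shift_topology F s' t'"
  obtain \<psi> where psi: "conjugacy F s' t' E s t \<psi>" "\<forall>x\<in>edge_shift E s t. \<psi> (\<phi> x) = x \<and> \<phi> x \<in> edge_shift F s' t'"
     "\<forall>y\<in>edge_shift F s' t'. \<phi> (\<psi> y) = y \<and> \<psi> y \<in> edge_shift E s t"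
    using conj_inverse[OF cj] by (elim exE conjE) simp
  have hm: "homeomorphic_map ?T ?T' \<phi>" and cm: "\<forall>x\<in>edge_shift E s t. \<phi> (shift x) = shift (\<phi> x)"
    using cj unfolding conjugacy_def by simp_all
  have YX: "Y \<subseteq> edge_shift E s t" and Ycl: "closedin ?T Y" and Yne: "Y \<noteq> {}" and Ysh: "\<forall>y\<in>Y. shift y \<in> Y"
    and Ybk: "\<forall>y\<in>Y. bk 1 y \<in> Y" and Yab: "absorbing ?T Y"
    using gY unfolding good_def by simp_all
  have YT: "Y \<subseteq> topspace ?T" using YX by (simp add: topspace_shift)
  have "\<phi> ` Y \<subseteq> edge_shift F s' t'" using YX psi(2) by blast
  moreover have "closedin ?T' (\<phi> ` Y)" using homeomorphic_map_closedness[OF hm YT] Ycl by simp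
  moreover have "\<phi> ` Y \<noteq> {}" using Yne by simp
  moreover have "\<forall>y\<in>\<phi> ` Y. shift y \<in> \<phi> ` Y"
  proof
    fix y assume "y \<in> \<phi> ` Y"
    then obtain x where x: "x \<in> Y" "y = \<phi> x" by blast
    have "shift y = \<phi> (shift x)" using cm x YX by auto
    then show "shift y \<in> \<phi> ` Y" using Ysh x by simp
  qed
  moreover have "\<forall>y\<in>\<phi> ` Y. bk 1 y \<in> \<phi> ` Y"
  proof
    fix y assume "y \<in> \<phi> ` Y"
    then obtain x where x: "x \<in> Y" "y = \<phi> x" by blast
    have "bk 1 y = \<phi> (bk 1 x)" using conj_bk1[OF cj, of x] x YX by auto
    then show "bk 1 y \<in> \<phi> ` Y" using Ybk x by simp
  qed
  moreover have "absorbing ?T' (\<phi> ` Y)"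
    unfolding absorbing_def
  proof (intro ballI impI)
    fix z' assume z'T: "z' \<in> topspace ?T'" and h: "hits ?T' z' (\<phi> ` Y)"
    have z'X: "z' \<in> edge_shift F s' t'" using z'T by (simp add: topspace_shift)
    obtain w' where w': "w' \<in> \<phi> ` Y" and hw: "\<forall>U. openin ?T' U \<and> w' \<in> U \<longrightarrow> (\<forall>n0. \<exists>n\<ge>n0. bk n z' \<in> U)"
      using h unfolding hits_def by (elim bexE) simp
    obtain w where w: "w \<in> Y" "w' = \<phi> w" using w' by blast
    define z where "z = \<psi> z'"
    have zX: "z \<in> edge_shift E s t" using psi(3) z'X z_def by simp
    have zz: "\<phi> z = z'" using psi(3) z'X z_def by simp
    have "hits ?T z Y"
      unfolding hits_def
    proof (intro bexI[OF _ w(1)] allI impI)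
      fix U n0 assume U: "openin ?T U \<and> w \<in> U"
      have UT: "U \<subseteq> topspace ?T" using U openin_subset by blast
      have "openin ?T' (\<phi> ` U)" using homeomorphic_map_openness[OF hm UT] U by simp
      moreover have "w' \<in> \<phi> ` U" using U w by simp
      ultimately obtain n where n: "n \<ge> n0" "bk n z' \<in> \<phi> ` U" using hw by blast
      then obtain u where u: "u \<in> U" "bk n z' = \<phi> u" by blast
      have uX: "u \<in> edge_shift E s t" using u(1) UT topspace_shift by blast
      have "\<phi> (bk n z) = \<phi> u" using conj_bk[OF cj zX, of n] zz u(2) by simp
      then have "\<psi> (\<phi> (bk n z)) = \<psi> (\<phi> u)" by simp
      then have "bk n z = u" using psi(2) bk_X[OF zX] uX by simp
      then show "\<exists>n\<ge>n0. bk n z \<in> U" using n(1) u(1) by blast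
    qed
    then have "z \<in> Y" using Yab zX unfolding absorbing_def topspace_shift by blast
    then show "z' \<in> \<phi> ` Y" using zz by blast
  qed
  ultimately show ?thesis unfolding good_def by simp
qed


theorem lemma2p23:
  fixes V :: "'v set" and E :: "'e set" and s t :: "'e \<Rightarrow> 'v"
    and W :: "'w set" and F :: "'f set" and s' t' :: "'f \<Rightarrow> 'w"
    and C :: "'v set" and C' :: "'w set"
    and \<phi> :: "(int \<Rightarrow> 'e) \<Rightarrow> (int \<Rightarrow> 'f)"
  assumes "fin_digraph V E s t" and "no_sinks_sources V E s t"
    and "fin_digraph W F s' t'" and "no_sinks_sources W F s' t'"
    and "terminal_component E s t C" and "\<forall>D. terminal_component E s t D \<longrightarrow> D = C"
    and "terminal_component F s' t' C'" and "\<forall>D. terminal_component F s' t' D \<longrightarrow> D = C'"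
    and "conjugacy E s t F s' t' \<phi>"
  shows "\<phi> ` edge_shift (sub_edges E s t C) s t = edge_shift (sub_edges F s' t' C') s' t'"
proof -
  let ?XC = "edge_shift (sub_edges E s t C) s t" and ?XC' = "edge_shift (sub_edges F s' t' C') s' t'"
  have g1: "good F s' t' (\<phi> ` ?XC)" using good_transfer[OF assms(9) XC_good[OF assms(1,2,5)]] .
  have s1: "?XC' \<subseteq> \<phi> ` ?XC" using XC_least[OF assms(3,4,7,8) g1] .
  obtain \<psi> where psi: "conjugacy F s' t' E s t \<psi>"
     "\<forall>y\<in>edge_shift F s' t'. \<phi> (\<psi> y) = y \<and> \<psi> y \<in> edge_shift E s t"
    using conj_inverse[OF assms(9)] by (elim exE conjE) simp
  have g2: "good E s t (\<psi> ` ?XC')" using good_transfer[OF psi(1) XC_good[OF assms(3,4,7)]] .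
  have s2: "?XC \<subseteq> \<psi> ` ?XC'" using XC_least[OF assms(1,2,5,6) g2] .
  have s3: "\<phi> ` ?XC \<subseteq> ?XC'"
  proof
    fix y assume "y \<in> \<phi> ` ?XC"
    then obtain x where x: "x \<in> ?XC" "y = \<phi> x" by blast
    then obtain x' where x': "x' \<in> ?XC'" "x = \<psi> x'" using s2 by blast
    have "x' \<in> edge_shift F s' t'" using XC_sub[of F s' t' C'] x'(1) by (rule subsetD)
    then have "\<phi> x = x'" using psi(2) x'(2) by simp
    then show "y \<in> ?XC'" using x x' by simp
  qed
  show ?thesis using s1 s3 by (rule subset_antisym[rotated])
qed

end
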